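(* Let $\mathbb{K}\in\{\mathbb{R},\mathbb{C}\}$, $\star\in\{*,T\}$, $\epsilon_1,\epsilon_2\in\{1,-1\}$, and let $Q(\lambda)=\lambda^2M+\lambda D+K\in\mathbb{K}^{n\times n}[\lambda]$ satisfy $M^\star=\epsilon_1M$, $D^\star=\epsilon_2D$, $K^\star=\epsilon_1K$. If $(X,\Lambda)\in\mathbb{K}^{n\times p}\times\mathbb{K}^{p\times p}$ is an invariant pair of $Q(\lambda)$ with $\sigma(\epsilon_1\epsilon_2\Lambda^\star)\cap\sigma(\Lambda)=\emptyset$, then $X^\star MX\Lambda+\epsilon_1\epsilon_2\Lambda^\star X^\star MX+X^\star DX=0$.
   Context: For a matrix $A$, $A^*$ is the conjugate transpose and $A^T$ the transpose; $A^\star$ means $A^*$ if $\star=*$ and $A^T$ if $\star=T$. $\sigma(A)$ is the spectrum. A pair $(X,\Lambda)$ is an invariant pair of $Q(\lambda)$ if $MX\Lambda^2+DX\Lambda+KX=0$. *)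

theory Defs
  imports "Jordan_Normal_Form.Spectral_Radius" "Jordan_Normal_Form.Schur_Decomposition"
begin

datatype star_kind = Adj | Tr

definition mat_star :: "star_kind \<Rightarrow> 'a :: conjugatable_field mat \<Rightarrow> 'a mat" where
  "mat_star s A = (case s of Adj \<Rightarrow> mat_adjoint A | Tr \<Rightarrow> transpose_mat A)"

definition invariant_pair :: "'a :: comm_ring_1 mat \<Rightarrow> 'a mat \<Rightarrow> 'a mat \<Rightarrow> 'a mat \<Rightarrow> 'a mat \<Rightarrow> bool" where
  "invariant_pair M D K X L \<longleftrightarrow> M * X * (L * L) + D * X * L + K * X = 0\<^sub>m (dim_row M) (dim_col L)"

end

theory Submission
  imports Defs
begin

definition cf :: "star_kind \<Rightarrow> 'a :: conjugatable_field \<Rightarrow> 'a" where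
  "cf s = (case s of Adj \<Rightarrow> conjugate | Tr \<Rightarrow> id)"

lemma cf_simps[simp]: "cf s (a * b) = cf s a * cf s b" "cf s (a + b) = cf s a + cf s b"
  "cf s (cf s a) = a" "cf s 0 = 0"
  by (cases s; simp add: cf_def conjugate_dist_mul conjugate_dist_add)+

lemma cf_sum: "cf s (sum f S) = sum (\<lambda>x. cf s (f x)) S"
  by (induct S rule: infinite_finite_induct) (auto simp: cf_def conjugate_dist_add split: star_kind.splits)

lemma mat_star_alt: "mat_star s A = mat (dim_col A) (dim_row A) (\<lambda>(i,j). cf s (A $$ (j,i)))"
  by (cases s; rule eq_matI; auto simp: mat_star_def mat_adjoint_def cf_def mat_of_rows_index)

lemma mat_star_carrier[simp]: "A \<in> carrier_mat n m \<Longrightarrow> mat_star s A \<in> carrier_mat m n"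
  by (simp add: mat_star_alt)

lemma mat_star_dims[simp]: "dim_row (mat_star s A) = dim_col A" "dim_col (mat_star s A) = dim_row A"
  by (simp_all add: mat_star_alt)

lemma mat_star_star[simp]: "mat_star s (mat_star s A) = A"
  by (rule eq_matI, auto simp: mat_star_alt)

lemma mat_star_mult: assumes "A \<in> carrier_mat n m" "B \<in> carrier_mat m k"
  shows "mat_star s (A * B) = mat_star s B * mat_star s A"
  using assms by (intro eq_matI, auto simp: mat_star_alt scalar_prod_def cf_sum mult.commute intro!: sum.cong)

lemma mat_star_add: assumes "A \<in> carrier_mat n m" "B \<in> carrier_mat n m"
  shows "mat_star s (A + B) = mat_star s A + mat_star s B"
  using assms by (intro eq_matI, auto simp: mat_star_alt)

lemma mat_star_smult: assumes "cf s c = c"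
  shows "mat_star s (c \<cdot>\<^sub>m A) = c \<cdot>\<^sub>m mat_star s A"
  using assms by (intro eq_matI, auto simp: mat_star_alt)

lemma mat_star_zero[simp]: "mat_star s (0\<^sub>m n m) = 0\<^sub>m m n"
  by (intro eq_matI, auto simp: mat_star_alt)

lemma assoc_d: "dim_col A = dim_row B \<Longrightarrow> dim_col B = dim_row C \<Longrightarrow> (A * B) * C = A * (B * C)"
  by (rule assoc_mult_mat[of A "dim_row A" "dim_col A" B "dim_col B" C "dim_col C"], auto)
lemma distl_d: "dim_col (A::'a::semiring_0 mat) = dim_row B \<Longrightarrow> dim_row B = dim_row C \<Longrightarrow> dim_col B = dim_col C \<Longrightarrow> A * (B + C) = A * B + A * C"
  by (rule mult_add_distrib_mat[of A "dim_row A" "dim_col A" B "dim_col B"], auto)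
lemma distr_d: "dim_col (A::'a::semiring_0 mat) = dim_row C \<Longrightarrow> dim_row A = dim_row B \<Longrightarrow> dim_col A = dim_col B \<Longrightarrow> (A + B) * C = A * C + B * C"
  by (rule add_mult_distrib_mat[of A "dim_row A" "dim_col A" B C "dim_col C"], auto)
lemma smr_d: "dim_col (A::'a::comm_semiring_0 mat) = dim_row B \<Longrightarrow> A * (k \<cdot>\<^sub>m B) = k \<cdot>\<^sub>m (A * B)"
  by (rule mult_smult_distrib[of A "dim_row A" "dim_col A" B "dim_col B"], auto)
lemma sml_d: "dim_col (A::'a::comm_semiring_0 mat) = dim_row B \<Longrightarrow> (k \<cdot>\<^sub>m A) * B = k \<cdot>\<^sub>m (A * B)"
  by (rule mult_smult_assoc_mat[of A "dim_row A" "dim_col A" B "dim_col B"], auto)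
lemma star_mult_d: "dim_col A = dim_row B \<Longrightarrow> mat_star s (A * B) = mat_star s B * mat_star s A"
  by (rule mat_star_mult[of A "dim_row A" "dim_col A" B "dim_col B"], auto)
lemma star_add_d: "dim_row A = dim_row B \<Longrightarrow> dim_col A = dim_col B \<Longrightarrow> mat_star s (A + B) = mat_star s A + mat_star s B"
  by (rule mat_star_add[of A "dim_row A" "dim_col A"], auto)

lemmas mat_d = assoc_d distl_d distr_d smr_d sml_d star_mult_d star_add_d

lemma smsm: "a \<cdot>\<^sub>m (b \<cdot>\<^sub>m A) = (a * b :: 'a :: semigroup_mult) \<cdot>\<^sub>m A"
  by (rule eq_matI, auto simp: mult.assoc)
lemma onesm: "(1 :: 'a :: monoid_mult) \<cdot>\<^sub>m A = A"
  by (rule eq_matI, auto)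
lemma smadd_d: "dim_row A = dim_row B \<Longrightarrow> dim_col A = dim_col B \<Longrightarrow> k \<cdot>\<^sub>m (A + B) = (k :: 'a :: semiring) \<cdot>\<^sub>m A + k \<cdot>\<^sub>m B"
  by (rule eq_matI, auto simp: distrib_left)
lemma lin: fixes T1 :: "'a :: ab_group_add mat"
  assumes "T1 \<in> carrier_mat p p" "T2 \<in> carrier_mat p p" "T3 \<in> carrier_mat p p"
    "U1 \<in> carrier_mat p p" "U2 \<in> carrier_mat p p" "C \<in> carrier_mat p p"
    and e1: "T1 + T3 + C = 0\<^sub>m p p" and e2: "U1 + U2 + C = 0\<^sub>m p p"
  shows "T1 + T2 + T3 = T2 + U1 + U2"
proof (rule eq_matI)
  fix i j assume ij: "i < dim_row (T2 + U1 + U2)" "j < dim_col (T2 + U1 + U2)"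
  from e1 have "(T1 + T3 + C) $$ (i,j) = 0\<^sub>m p p $$ (i,j)" by (rule arg_cong)
  then have a: "T1 $$ (i,j) + T3 $$ (i,j) + C $$ (i,j) = 0" using ij assms(1-6) by (simp add: add.assoc)
  from e2 have "(U1 + U2 + C) $$ (i,j) = 0\<^sub>m p p $$ (i,j)" by (rule arg_cong)
  then have b: "U1 $$ (i,j) + U2 $$ (i,j) + C $$ (i,j) = 0" using ij assms(1-6) by (simp add: add.assoc)
  have h: "T1 $$ (i,j) + T3 $$ (i,j) = U1 $$ (i,j) + U2 $$ (i,j)"
    using a b by (metis add_right_cancel)
  have "T1 $$ (i,j) + T2 $$ (i,j) + T3 $$ (i,j) = T2 $$ (i,j) + (T1 $$ (i,j) + T3 $$ (i,j))"
    by (simp add: ac_simps)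
  also have "\<dots> = T2 $$ (i,j) + (U1 $$ (i,j) + U2 $$ (i,j))" using h by simp
  also have "\<dots> = T2 $$ (i,j) + U1 $$ (i,j) + U2 $$ (i,j)" by (simp add: add.assoc)
  finally have "T1 $$ (i,j) + T2 $$ (i,j) + T3 $$ (i,j) = T2 $$ (i,j) + U1 $$ (i,j) + U2 $$ (i,j)" .
  then show "(T1 + T2 + T3) $$ (i, j) = (T2 + U1 + U2) $$ (i, j)" using ij assms by auto
qed (use assms in auto)

lemma key: fixes M D K X L :: "'a::conjugatable_field mat"
  assumes e1: "e1 \<in> {1, -1}" and e2: "e2 \<in> {1, -1}" and c1: "cf s e1 = e1" and c2: "cf s e2 = e2"
  and M: "M \<in> carrier_mat n n" and D: "D \<in> carrier_mat n n" and K: "K \<in> carrier_mat n n"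
  and X: "X \<in> carrier_mat n p" and L: "L \<in> carrier_mat p p"
  and sM: "mat_star s M = e1 \<cdot>\<^sub>m M" and sD: "mat_star s D = e2 \<cdot>\<^sub>m D" and sK: "mat_star s K = e1 \<cdot>\<^sub>m K"
  and inv: "invariant_pair M D K X L"
  shows "(mat_star s X * M * X * L + (e1 * e2) \<cdot>\<^sub>m (mat_star s L * mat_star s X * M * X)
        + mat_star s X * D * X) * L =
     ((e1 * e2) \<cdot>\<^sub>m mat_star s L) * (mat_star s X * M * X * L + (e1 * e2) \<cdot>\<^sub>m (mat_star s L * mat_star s X * M * X)
        + mat_star s X * D * X)"
proof -
  define Xs where "Xs = mat_star s X"
  define Ls where "Ls = mat_star s L"
  define A where "A = Xs * M * X"
  define B where "B = Xs * D * X"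
  define C where "C = Xs * K * X"
  define ep where "ep = e1 * e2"
  have ep1: "ep * ep = 1" and e11: "e1 * e1 = 1" using e1 e2 unfolding ep_def by auto
  have Xs: "Xs \<in> carrier_mat p n" and Ls: "Ls \<in> carrier_mat p p" using X L Xs_def Ls_def by auto
  have A: "A \<in> carrier_mat p p" and B: "B \<in> carrier_mat p p" and C: "C \<in> carrier_mat p p"
    using Xs M D K X unfolding A_def B_def C_def by auto
  have Z: "M * X * (L * L) + D * X * L + K * X = 0\<^sub>m n p"
    using inv M L unfolding invariant_pair_def by auto
  have "Xs * (M * X * (L * L) + D * X * L + K * X) = 0\<^sub>m p p" using Z Xs by simp
  moreover have "Xs * (M * X * (L * L) + D * X * L + K * X) = A * L * L + B * L + C"
    using Xs M D K X L unfolding A_def B_def C_def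
    by (simp add: mat_d)
  ultimately have E1: "A * L * L + B * L + C = 0\<^sub>m p p" by simp
  have sA: "mat_star s A = e1 \<cdot>\<^sub>m A" using Xs M X c1 sM unfolding A_def Xs_def
    by (simp add: mat_d mat_star_smult)
  have sB: "mat_star s B = e2 \<cdot>\<^sub>m B" using Xs D X c2 sD unfolding B_def Xs_def
    by (simp add: mat_d mat_star_smult)
  have sC: "mat_star s C = e1 \<cdot>\<^sub>m C" using Xs K X c1 sK unfolding C_def Xs_def
    by (simp add: mat_d mat_star_smult)
  have "e1 \<cdot>\<^sub>m mat_star s (A * L * L + B * L + C) = Ls * (Ls * A) + ep \<cdot>\<^sub>m (Ls * B) + C"
    using A B C L Ls unfolding Ls_def
    by (simp add: mat_d sA sB sC smsm smadd_d e11 ep_def onesm)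
  then have E2: "Ls * (Ls * A) + ep \<cdot>\<^sub>m (Ls * B) + C = 0\<^sub>m p p" using E1 by simp
  have E1': "A * (L * L) + B * L + C = 0\<^sub>m p p" using E1 A L by (simp add: mat_d)
  have W: "mat_star s X * M * X * L + (e1 * e2) \<cdot>\<^sub>m (mat_star s L * mat_star s X * M * X)
        + mat_star s X * D * X = A * L + ep \<cdot>\<^sub>m (Ls * A) + B"
    using X M D L Xs unfolding A_def B_def Ls_def Xs_def ep_def by (simp add: mat_d)
  have lhs: "(A * L + ep \<cdot>\<^sub>m (Ls * A) + B) * L = A * (L * L) + ep \<cdot>\<^sub>m (Ls * (A * L)) + B * L"
    using A B L Ls by (simp add: mat_d)
  have rhs: "(ep \<cdot>\<^sub>m Ls) * (A * L + ep \<cdot>\<^sub>m (Ls * A) + B) = ep \<cdot>\<^sub>m (Ls * (A * L)) + Ls * (Ls * A) + ep \<cdot>\<^sub>m (Ls * B)"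
    using A B L Ls by (simp add: mat_d smsm smadd_d ep1 onesm)
  have "A * (L * L) + ep \<cdot>\<^sub>m (Ls * (A * L)) + B * L = ep \<cdot>\<^sub>m (Ls * (A * L)) + Ls * (Ls * A) + ep \<cdot>\<^sub>m (Ls * B)"
    by (rule lin[OF _ _ _ _ _ C E1' E2], use A B L Ls in auto)
  then have fin: "(A * L + ep \<cdot>\<^sub>m (Ls * A) + B) * L = (ep \<cdot>\<^sub>m Ls) * (A * L + ep \<cdot>\<^sub>m (Ls * A) + B)"
    unfolding lhs rhs .
  show ?thesis unfolding W using fin unfolding ep_def Ls_def .
qed

lemma tri_zero: fixes A V T :: "'a::field mat"
  assumes A: "A \<in> carrier_mat p p" and V: "V \<in> carrier_mat p p" and T: "T \<in> carrier_mat p p"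
  and ut: "upper_triangular T" and eq: "V * T = A * V"
  and ne: "\<And>j. j < p \<Longrightarrow> \<not> eigenvalue A (T $$ (j,j))"
  shows "V = 0\<^sub>m p p"
proof -
  have "\<forall>i<p. V $$ (i,j) = 0" if "j < p" for j
    using that
  proof (induction j rule: less_induct)
    case (less j)
    have ent: "(V * T) $$ (i,j) = V $$ (i,j) * T $$ (j,j)" if i: "i < p" for i
    proof -
      have "(V * T) $$ (i,j) = (\<Sum>k\<in>{0..<p}. V $$ (i,k) * T $$ (k,j))"
        using V T i less.prems by (simp add: scalar_prod_def)
      also have "\<dots> = (\<Sum>k\<in>{j}. V $$ (i,k) * T $$ (k,j))"
      proof (rule sum.mono_neutral_right)
        show "\<forall>k\<in>{0..<p} - {j}. V $$ (i, k) * T $$ (k, j) = 0"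
        proof
          fix k assume k: "k \<in> {0..<p} - {j}"
          show "V $$ (i, k) * T $$ (k, j) = 0"
          proof (cases "k < j")
            case True then show ?thesis using less.IH[of k] less.prems i by auto
          next
            case False then have "j < k" using k by auto
            then have "T $$ (k,j) = 0" using upper_triangularD[OF ut] k T by auto
            then show ?thesis by simp
          qed
        qed
      qed (use less.prems in auto)
      finally show ?thesis by simp
    qed
    define v where "v = col V j"
    have v: "v \<in> carrier_vec p" using V v_def by auto
    have Av: "A *\<^sub>v v = T $$ (j,j) \<cdot>\<^sub>v v"
    proof (rule eq_vecI)
      fix i assume "i < dim_vec (T $$ (j, j) \<cdot>\<^sub>v v)"
      then have i: "i < p" using v by auto
      have "(A *\<^sub>v v) $ i = (A * V) $$ (i,j)" using A V i less.prems v_def by auto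
      also have "\<dots> = (V * T) $$ (i,j)" using eq by simp
      also have "\<dots> = V $$ (i,j) * T $$ (j,j)" using ent[OF i] .
      finally show "(A *\<^sub>v v) $ i = (T $$ (j, j) \<cdot>\<^sub>v v) $ i" using i v v_def V less.prems by auto
    qed (use A v in auto)
    have "v = 0\<^sub>v p"
    proof (rule ccontr)
      assume "v \<noteq> 0\<^sub>v p"
      then have "eigenvector A v (T $$ (j,j))" using Av v A unfolding eigenvector_def by auto
      then have "eigenvalue A (T $$ (j,j))" unfolding eigenvalue_def by auto
      with ne[OF less.prems] show False by simp
    qed
    then have "\<forall>i<p. v $ i = 0" by auto
    then show ?case using v_def V less.prems by auto
  qed
  then show ?thesis using V by (intro eq_matI) auto
qed

lemma sylvester: fixes A B W :: "complex mat"
  assumes A: "A \<in> carrier_mat p p" and B: "B \<in> carrier_mat p p" and W: "W \<in> carrier_mat p p"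
  and eq: "W * B = A * W" and disj: "spectrum A \<inter> spectrum B = {}"
  shows "W = 0\<^sub>m p p"
proof -
  obtain es where es: "char_poly B = (\<Prod>a\<leftarrow>es. [:- a, 1:])"
    using char_poly_factorized[OF B] by auto
  obtain T where T: "T \<in> carrier_mat p p" "upper_triangular T" "similar_mat B T"
    using schur_decomposition_exists[OF B es] by auto
  from similar_matD[OF T(3)] obtain n' P Q where h: "{B,T,P,Q} \<subseteq> carrier_mat n' n'"
    "P * Q = 1\<^sub>m n'" "Q * P = 1\<^sub>m n'" "B = P * T * Q" by blast
  have "n' = p" using h(1) B by auto
  then have PQ: "P \<in> carrier_mat p p" "Q \<in> carrier_mat p p" "P * Q = 1\<^sub>m p" "Q * P = 1\<^sub>m p"
    "B = P * T * Q" using h by auto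
  have cp: "char_poly B = (\<Prod>a\<leftarrow>diag_mat T. [:- a, 1:])"
    using char_poly_similar[OF T(3)] char_poly_upper_triangular[OF T(1,2)] by simp
  define V where "V = W * P"
  have V: "V \<in> carrier_mat p p" using W PQ V_def by auto
  have "V * T = W * P * T * (Q * P)" using PQ W T V_def by simp
  also have "\<dots> = W * B * P" using PQ W T by (simp add: assoc_mult_mat[of _ p p _ p _ p])
  also have "\<dots> = A * V" using eq A W PQ V_def by simp
  finally have VT: "V * T = A * V" .
  have ne: "\<not> eigenvalue A (T $$ (j,j))" if j: "j < p" for j
  proof -
    have "T $$ (j,j) \<in> set (diag_mat T)" using j T(1) unfolding diag_mat_def by auto
    then have "poly (char_poly B) (T $$ (j,j)) = 0" unfolding cp
      by (simp add: poly_prod_list prod_list_zero_iff)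
    then have "T $$ (j,j) \<in> spectrum B"
      using eigenvalue_root_char_poly[OF B] unfolding spectrum_def by auto
    then show ?thesis using disj unfolding spectrum_def by auto
  qed
  have V0: "V = 0\<^sub>m p p" by (rule tri_zero[OF A V T(1,2) VT ne])
  have "W = V * Q" using V_def W PQ by simp
  then show ?thesis using V0 PQ by simp
qed

theorem corollary2p4:
  shows
  "(\<forall>(s::star_kind) (e1::complex) (e2::complex) n p (M::complex mat) D K X L.
      e1 \<in> {1, -1} \<longrightarrow> e2 \<in> {1, -1} \<longrightarrow>
      M \<in> carrier_mat n n \<longrightarrow> D \<in> carrier_mat n n \<longrightarrow> K \<in> carrier_mat n n \<longrightarrow>
      X \<in> carrier_mat n p \<longrightarrow> L \<in> carrier_mat p p \<longrightarrow>
      mat_star s M = e1 \<cdot>\<^sub>m M \<longrightarrow> mat_star s D = e2 \<cdot>\<^sub>m D \<longrightarrow> mat_star s K = e1 \<cdot>\<^sub>m K \<longrightarrow>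
      invariant_pair M D K X L \<longrightarrow>
      spectrum ((e1 * e2) \<cdot>\<^sub>m mat_star s L) \<inter> spectrum L = {} \<longrightarrow>
      mat_star s X * M * X * L + (e1 * e2) \<cdot>\<^sub>m (mat_star s L * mat_star s X * M * X)
        + mat_star s X * D * X = 0\<^sub>m p p)
   \<and>
   (\<forall>(s::star_kind) (e1::real) (e2::real) n p (M::real mat) D K X L.
      e1 \<in> {1, -1} \<longrightarrow> e2 \<in> {1, -1} \<longrightarrow>
      M \<in> carrier_mat n n \<longrightarrow> D \<in> carrier_mat n n \<longrightarrow> K \<in> carrier_mat n n \<longrightarrow>
      X \<in> carrier_mat n p \<longrightarrow> L \<in> carrier_mat p p \<longrightarrow>
      mat_star s M = e1 \<cdot>\<^sub>m M \<longrightarrow> mat_star s D = e2 \<cdot>\<^sub>m D \<longrightarrow> mat_star s K = e1 \<cdot>\<^sub>m K \<longrightarrow>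
      invariant_pair M D K X L \<longrightarrow>
      spectrum (map_mat complex_of_real ((e1 * e2) \<cdot>\<^sub>m mat_star s L))
        \<inter> spectrum (map_mat complex_of_real L) = {} \<longrightarrow>
      mat_star s X * M * X * L + (e1 * e2) \<cdot>\<^sub>m (mat_star s L * mat_star s X * M * X)
        + mat_star s X * D * X = 0\<^sub>m p p)"
  proof (intro conjI allI impI)
  fix s and e1 e2 :: complex and n p and M D K X L :: "complex mat"
  assume e1: "e1 \<in> {1, -1}" and e2: "e2 \<in> {1, -1}"
    and M: "M \<in> carrier_mat n n" and D: "D \<in> carrier_mat n n" and K: "K \<in> carrier_mat n n"
    and X: "X \<in> carrier_mat n p" and L: "L \<in> carrier_mat p p"
    and sM: "mat_star s M = e1 \<cdot>\<^sub>m M" and sD: "mat_star s D = e2 \<cdot>\<^sub>m D" and sK: "mat_star s K = e1 \<cdot>\<^sub>m K"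
    and inv: "invariant_pair M D K X L"
    and sp: "spectrum ((e1 * e2) \<cdot>\<^sub>m mat_star s L) \<inter> spectrum L = {}"
  have c1: "cf s e1 = e1" using e1 by (cases s, auto simp: cf_def)
  have c2: "cf s e2 = e2" using e2 by (cases s, auto simp: cf_def)
  note k = key[OF e1 e2 c1 c2 M D K X L sM sD sK inv]
  show "mat_star s X * M * X * L + (e1 * e2) \<cdot>\<^sub>m (mat_star s L * mat_star s X * M * X)
        + mat_star s X * D * X = 0\<^sub>m p p"
    by (rule sylvester[OF _ L _ k sp], use L X M D in auto)
next
  fix s and e1 e2 :: real and n p and M D K X L :: "real mat"
  assume e1: "e1 \<in> {1, -1}" and e2: "e2 \<in> {1, -1}"
    and M: "M \<in> carrier_mat n n" and D: "D \<in> carrier_mat n n" and K: "K \<in> carrier_mat n n"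
    and X: "X \<in> carrier_mat n p" and L: "L \<in> carrier_mat p p"
    and sM: "mat_star s M = e1 \<cdot>\<^sub>m M" and sD: "mat_star s D = e2 \<cdot>\<^sub>m D" and sK: "mat_star s K = e1 \<cdot>\<^sub>m K"
    and inv: "invariant_pair M D K X L"
    and sp: "spectrum (map_mat complex_of_real ((e1 * e2) \<cdot>\<^sub>m mat_star s L))
        \<inter> spectrum (map_mat complex_of_real L) = {}"
  have c1: "cf s e1 = e1" by (cases s, auto simp: cf_def)
  have c2: "cf s e2 = e2" by (cases s, auto simp: cf_def)
  note k = key[OF e1 e2 c1 c2 M D K X L sM sD sK inv]
  define W where "W = mat_star s X * M * X * L + (e1 * e2) \<cdot>\<^sub>m (mat_star s L * mat_star s X * M * X)
        + mat_star s X * D * X"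
  define R where "R = (e1 * e2) \<cdot>\<^sub>m mat_star s L"
  have W: "W \<in> carrier_mat p p" using L X M D unfolding W_def by auto
  have R: "R \<in> carrier_mat p p" using L unfolding R_def by auto
  have kk: "W * L = R * W" using k unfolding W_def R_def .
  have "map_mat complex_of_real W * map_mat complex_of_real L = map_mat complex_of_real (W * L)"
    by (rule of_real_hom.mat_hom_mult[OF W L, symmetric])
  also have "\<dots> = map_mat complex_of_real (R * W)" using kk by simp
  also have "\<dots> = map_mat complex_of_real R * map_mat complex_of_real W"
    by (rule of_real_hom.mat_hom_mult[OF R W])
  finally have hk: "map_mat complex_of_real W * map_mat complex_of_real L
      = map_mat complex_of_real R * map_mat complex_of_real W" .
  have h0: "map_mat complex_of_real W = 0\<^sub>m p p"
    by (rule sylvester[OF _ _ _ hk sp[folded R_def]], use W L R in auto)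
  have "W = 0\<^sub>m p p"
  proof (rule eq_matI)
    fix i j assume ij: "i < dim_row (0\<^sub>m p p :: real mat)" "j < dim_col (0\<^sub>m p p :: real mat)"
    from h0 have "map_mat complex_of_real W $$ (i,j) = 0\<^sub>m p p $$ (i,j)" by (rule arg_cong)
    then show "W $$ (i,j) = 0\<^sub>m p p $$ (i,j)" using ij W by simp
  qed (use W in auto)
  then show "mat_star s X * M * X * L + (e1 * e2) \<cdot>\<^sub>m (mat_star s L * mat_star s X * M * X)
        + mat_star s X * D * X = 0\<^sub>m p p" unfolding W_def .
qed

end
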